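(* Let $T$ be a locally finite, infinite tree with root $o$ in which every vertex has forward degree at least $2$, let $\phi$ be an ultrametric element on $T$, let $\mu$ be a Borel probability measure on $\partial T$ with $\operatorname{supp}(\mu) = \partial T$, and let $\sigma$ be a probability measure on $[0,\infty)$ whose distribution function $F_\sigma(r) = \sigma([0,r))$ satisfies $F_\sigma(0+) = 0$, $F_\sigma(\phi(o)) < 1$, and $F_\sigma$ is strictly increasing on each set $\Lambda_\phi(\xi) = \{\phi(x) : x \in \pi(o,\xi)\}$, $\xi \in \partial T$. Then there is an ultrametric element $\phi_*$ on $T$ such that the $(\phi,\mu,\sigma)$-process coincides with the standard process associated with $\mu$ and $\phi_*$, i.e. for every $t>0$ the operators $P^t$ defined from $(\phi,\mu,\sigma)$ and from $(\phi_*,\mu,\sigma_* )$ coincide.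
   Context: $T$ is identified with its vertex set; for $x\neq o$, $x^-$ is the neighbour of $x$ on the geodesic from $o$ to $x$, and the forward degree of $x$ is $|\{y : y^-=x\}|$. $\partial T$ is the set of ends (equivalence classes of geodesic rays, two rays being equivalent if their symmetric difference is finite); $\pi(o,\xi)$ is the ray from $o$ representing $\xi$. For distinct $\xi,\eta\in\partial T$, $\xi\wedge\eta$ is the last common vertex of $\pi(o,\xi)$ and $\pi(o,\eta)$. An ultrametric element is $\phi : T \to (0,\infty)$ with $\phi(x^-) > \phi(x)$ for all $x \neq o$ and $\phi(x_n)\to 0$ along every geodesic ray $[x_0,x_1,\dots]$; it induces the ultrametric $d_\phi(\xi,\eta) = \phi(\xi\wedge\eta)$ ($\xi\neq\eta$), $d_\phi(\xi,\xi)=0$, on $\partial T$, with closed balls $B_\phi(\xi,r) = \{\eta : d_\phi(\xi,\eta)\le r\}$. Given $(\phi,\mu,\sigma)$ as in the claim, for $r>0$ and $f\in L^2(\partial T,\mu)$ put $P_r f(\xi) = \mu(B_\phi(\xi,r))^{-1}\int_{B_\phi(\xi,r)} f\,d\mu$, and for $t>0$ let $\sigma^t$ be the probability measure on $[0,\infty)$ with distribution function $F_{\sigma^t}(r) = F_\sigma(r)^t$; then $P^t f(\xi) = \int_{[0,\infty)} P_r f(\xi)\,d\sigma^t(r)$. This is a Feller Markov semigroup; the associated Hunt process on $\partial T$ is called the $(\phi,\mu,\sigma)$-process. The standard process associated with $\mu$ and an ultrametric element $\phi$ is the $(\phi,\mu,\sigma_* )$-process, where $\sigma_*$ is the inverse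 exponential distribution, $\sigma_*([0,r)) = e^{-1/r}$ for $r>0$. *)

theory Defs
  imports "HOL-Probability.Probability"
begin

text \<open>Rooted tree on the vertex type 'v: root rt, parent map par (x^- = par x for x \<noteq> rt).\<close>

definition children :: "('v \<Rightarrow> 'v) \<Rightarrow> 'v \<Rightarrow> 'v \<Rightarrow> 'v set" where
  "children par rt x = {y. y \<noteq> rt \<and> par y = x}"

definition rooted_tree :: "('v \<Rightarrow> 'v) \<Rightarrow> 'v \<Rightarrow> bool" where
  "rooted_tree par rt \<longleftrightarrow> (\<forall>x. \<exists>n. (par ^^ n) x = rt)"

definition locally_finite_tree :: "('v \<Rightarrow> 'v) \<Rightarrow> 'v \<Rightarrow> bool" where
  "locally_finite_tree par rt \<longleftrightarrow> (\<forall>x. finite (children par rt x))"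

definition forward_degree :: "('v \<Rightarrow> 'v) \<Rightarrow> 'v \<Rightarrow> 'v \<Rightarrow> nat" where
  "forward_degree par rt x = card (children par rt x)"

definition adjacent :: "('v \<Rightarrow> 'v) \<Rightarrow> 'v \<Rightarrow> 'v \<Rightarrow> 'v \<Rightarrow> bool" where
  "adjacent par rt x y \<longleftrightarrow> (y \<noteq> rt \<and> par y = x) \<or> (x \<noteq> rt \<and> par x = y)"

definition geodesic_ray :: "('v \<Rightarrow> 'v) \<Rightarrow> 'v \<Rightarrow> (nat \<Rightarrow> 'v) \<Rightarrow> bool" where
  "geodesic_ray par rt xs \<longleftrightarrow>
     (\<forall>n. adjacent par rt (xs n) (xs (Suc n))) \<and> (\<forall>n. xs (Suc (Suc n)) \<noteq> xs n)"

text \<open>The boundary: each end \<xi> is represented by its ray \<pi>(o,\<xi>) from the root.\<close>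
definition boundary :: "('v \<Rightarrow> 'v) \<Rightarrow> 'v \<Rightarrow> (nat \<Rightarrow> 'v) set" where
  "boundary par rt = {\<xi>. \<xi> 0 = rt \<and> (\<forall>n. \<xi> (Suc n) \<noteq> rt \<and> par (\<xi> (Suc n)) = \<xi> n)}"

definition confluent :: "(nat \<Rightarrow> 'v) \<Rightarrow> (nat \<Rightarrow> 'v) \<Rightarrow> 'v" where
  "confluent \<xi> \<eta> = \<xi> (GREATEST n. \<xi> n = \<eta> n)"

definition ultrametric_element :: "('v \<Rightarrow> 'v) \<Rightarrow> 'v \<Rightarrow> ('v \<Rightarrow> real) \<Rightarrow> bool" where
  "ultrametric_element par rt \<phi> \<longleftrightarrow>
     (\<forall>x. \<phi> x > 0) \<and> (\<forall>x. x \<noteq> rt \<longrightarrow> \<phi> (par x) > \<phi> x) \<and>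
     (\<forall>xs. geodesic_ray par rt xs \<longrightarrow> ((\<lambda>n. \<phi> (xs n)) \<longlongrightarrow> 0) sequentially)"

definition ultra_dist :: "('v \<Rightarrow> real) \<Rightarrow> (nat \<Rightarrow> 'v) \<Rightarrow> (nat \<Rightarrow> 'v) \<Rightarrow> real" where
  "ultra_dist \<phi> \<xi> \<eta> = (if \<xi> = \<eta> then 0 else \<phi> (confluent \<xi> \<eta>))"

definition ultra_ball ::
  "('v \<Rightarrow> 'v) \<Rightarrow> 'v \<Rightarrow> ('v \<Rightarrow> real) \<Rightarrow> (nat \<Rightarrow> 'v) \<Rightarrow> real \<Rightarrow> (nat \<Rightarrow> 'v) set" where
  "ultra_ball par rt \<phi> \<xi> r = {\<eta> \<in> boundary par rt. ultra_dist \<phi> \<xi> \<eta> \<le> r}"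

text \<open>Topology of \<partial>T: generated by the boundary sets \<partial>T_x = {\<xi>. x \<in> \<pi>(o,\<xi>)}.\<close>
definition boundary_open :: "('v \<Rightarrow> 'v) \<Rightarrow> 'v \<Rightarrow> (nat \<Rightarrow> 'v) set \<Rightarrow> bool" where
  "boundary_open par rt U \<longleftrightarrow> U \<subseteq> boundary par rt \<and>
     (\<forall>\<xi>\<in>U. \<exists>n. {\<eta> \<in> boundary par rt. \<eta> n = \<xi> n} \<subseteq> U)"

definition boundary_borel_measure :: "('v \<Rightarrow> 'v) \<Rightarrow> 'v \<Rightarrow> (nat \<Rightarrow> 'v) measure \<Rightarrow> bool" where
  "boundary_borel_measure par rt \<mu> \<longleftrightarrow>
     space \<mu> = boundary par rt \<and>
     sets \<mu> = sigma_sets (boundary par rt) {U. boundary_open par rt U}"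

definition support :: "('v \<Rightarrow> 'v) \<Rightarrow> 'v \<Rightarrow> (nat \<Rightarrow> 'v) measure \<Rightarrow> (nat \<Rightarrow> 'v) set" where
  "support par rt \<mu> = {\<xi> \<in> boundary par rt.
     \<forall>U. boundary_open par rt U \<and> \<xi> \<in> U \<longrightarrow> emeasure \<mu> U > 0}"

text \<open>Probability measures on [0,\<infinity>), as Borel measures on the reals null on (-\<infinity>,0).\<close>
definition prob_on_nonneg :: "real measure \<Rightarrow> bool" where
  "prob_on_nonneg \<sigma> \<longleftrightarrow> sets \<sigma> = sets borel \<and> prob_space \<sigma> \<and> emeasure \<sigma> {..<0} = 0"

definition distr_fun :: "real measure \<Rightarrow> real \<Rightarrow> real" where
  "distr_fun \<sigma> r = measure \<sigma> {0..<r}"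

definition F_star :: "real \<Rightarrow> real" where
  "F_star r = (if r > 0 then exp (- 1 / r) else 0)"

text \<open>\<nu> is the probability measure on [0,\<infinity>) with distribution function F(r)^t
  (i.e. \<nu> = \<sigma>^t when F = F_\<sigma>).\<close>
definition is_power_measure :: "real measure \<Rightarrow> (real \<Rightarrow> real) \<Rightarrow> real \<Rightarrow> bool" where
  "is_power_measure \<nu> F t \<longleftrightarrow> prob_on_nonneg \<nu> \<and> (\<forall>r>0. distr_fun \<nu> r = F r powr t)"

definition P_r ::
  "('v \<Rightarrow> 'v) \<Rightarrow> 'v \<Rightarrow> (nat \<Rightarrow> 'v) measure \<Rightarrow> ('v \<Rightarrow> real) \<Rightarrow> real
     \<Rightarrow> ((nat \<Rightarrow> 'v) \<Rightarrow> real) \<Rightarrow> (nat \<Rightarrow> 'v) \<Rightarrow> real" where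
  "P_r par rt \<mu> \<phi> r f \<xi> =
     set_lebesgue_integral \<mu> (ultra_ball par rt \<phi> \<xi> r) f / measure \<mu> (ultra_ball par rt \<phi> \<xi> r)"

definition P_t ::
  "('v \<Rightarrow> 'v) \<Rightarrow> 'v \<Rightarrow> (nat \<Rightarrow> 'v) measure \<Rightarrow> ('v \<Rightarrow> real) \<Rightarrow> real measure
     \<Rightarrow> ((nat \<Rightarrow> 'v) \<Rightarrow> real) \<Rightarrow> (nat \<Rightarrow> 'v) \<Rightarrow> real" where
  "P_t par rt \<mu> \<phi> \<nu> f \<xi> = integral\<^sup>L \<nu> (\<lambda>r. P_r par rt \<mu> \<phi> r f \<xi>)"

definition L2 :: "'a measure \<Rightarrow> ('a \<Rightarrow> real) set" where
  "L2 \<mu> = {f. f \<in> borel_measurable \<mu> \<and> integrable \<mu> (\<lambda>x. (f x)\<^sup>2)}"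

end

theory Submission
  imports Defs
begin


definition Cyl :: "('v \<Rightarrow> 'v) \<Rightarrow> 'v \<Rightarrow> (nat \<Rightarrow> 'v) \<Rightarrow> nat \<Rightarrow> (nat \<Rightarrow> 'v) set" where
  "Cyl par rt \<xi> n = {\<eta> \<in> boundary par rt. \<eta> n = \<xi> n}"

definition mm :: "('v \<Rightarrow> real) \<Rightarrow> (nat \<Rightarrow> 'v) \<Rightarrow> real \<Rightarrow> nat" where
  "mm \<psi> \<xi> r = (if r > 0 then (LEAST k. \<psi> (\<xi> k) \<le> r) else 0)"

lemma ray_strict:
  assumes "ultrametric_element par rt \<psi>" "\<xi> \<in> boundary par rt"
  shows "\<psi> (\<xi> (Suc k)) < \<psi> (\<xi> k)"
proof -
  have "\<xi> (Suc k) \<noteq> rt" "par (\<xi> (Suc k)) = \<xi> k" using assms(2) unfolding boundary_def by auto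
  then show ?thesis using assms(1) unfolding ultrametric_element_def by metis
qed

lemma ray_smono:
  assumes "ultrametric_element par rt \<psi>" "\<xi> \<in> boundary par rt"
  shows "strict_mono (\<lambda>k. - \<psi> (\<xi> k))"
  by (rule strict_mono_Suc_iff[THEN iffD2]) (use ray_strict[OF assms] in auto)

lemma ray_less_iff:
  assumes "ultrametric_element par rt \<psi>" "\<xi> \<in> boundary par rt"
  shows "\<psi> (\<xi> k) < \<psi> (\<xi> j) \<longleftrightarrow> j < k"
  using strict_mono_less[OF ray_smono[OF assms], of j k] by simp

lemma ray_le_iff:
  assumes "ultrametric_element par rt \<psi>" "\<xi> \<in> boundary par rt"
  shows "\<psi> (\<xi> k) \<le> \<psi> (\<xi> j) \<longleftrightarrow> j \<le> k"
  using strict_mono_less_eq[OF ray_smono[OF assms], of j k] by simp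

lemma boundary_geodesic:
  assumes "ultrametric_element par rt \<psi>" "\<xi> \<in> boundary par rt"
  shows "geodesic_ray par rt \<xi>"
proof -
  have "\<xi> (Suc (Suc n)) \<noteq> \<xi> n" for n
    using ray_less_iff[OF assms, of "Suc (Suc n)" n] by auto
  moreover have "adjacent par rt (\<xi> n) (\<xi> (Suc n))" for n
    using assms(2) unfolding boundary_def adjacent_def by auto
  ultimately show ?thesis unfolding geodesic_ray_def by auto
qed

lemma ray_tendsto:
  assumes "ultrametric_element par rt \<psi>" "\<xi> \<in> boundary par rt"
  shows "((\<lambda>n. \<psi> (\<xi> n)) \<longlongrightarrow> 0) sequentially"
  using assms(1) boundary_geodesic[OF assms] unfolding ultrametric_element_def by blast

lemma mm_le_iff:
  assumes "ultrametric_element par rt \<psi>" "\<xi> \<in> boundary par rt" "r > 0"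
  shows "mm \<psi> \<xi> r \<le> k \<longleftrightarrow> \<psi> (\<xi> k) \<le> r"
proof -
  have "eventually (\<lambda>n. \<psi> (\<xi> n) < r) sequentially"
    using order_tendstoD(2)[OF ray_tendsto[OF assms(1,2)] assms(3)] .
  then obtain N where N: "\<psi> (\<xi> N) < r" by (auto simp: eventually_sequentially)
  hence ex: "\<exists>k. \<psi> (\<xi> k) \<le> r" by (intro exI[of _ N]) simp
  have m: "mm \<psi> \<xi> r = (LEAST k. \<psi> (\<xi> k) \<le> r)" using assms(3) by (simp add: mm_def)
  show ?thesis
  proof
    assume "mm \<psi> \<xi> r \<le> k"
    moreover have "\<psi> (\<xi> (mm \<psi> \<xi> r)) \<le> r" unfolding m by (rule LeastI_ex[OF ex])
    ultimately show "\<psi> (\<xi> k) \<le> r" using ray_le_iff[OF assms(1,2), of k "mm \<psi> \<xi> r"] by linarith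
  next
    assume "\<psi> (\<xi> k) \<le> r" thus "mm \<psi> \<xi> r \<le> k" unfolding m by (rule Least_le)
  qed
qed

lemma agree_down:
  assumes "\<xi> \<in> boundary par rt" "\<eta> \<in> boundary par rt" "\<xi> k = \<eta> k" "j \<le> k"
  shows "\<xi> j = \<eta> j"
proof -
  have "\<xi> (k - i) = \<eta> (k - i)" for i
  proof (induction i)
    case 0 then show ?case using assms(3) by simp
  next
    case (Suc i)
    show ?case
    proof (cases "k - i = 0")
      case True then show ?thesis using Suc by simp
    next
      case False
      then have e: "k - i = Suc (k - Suc i)" by arith
      have "\<xi> (k - Suc i) = par (\<xi> (k - i))" "\<eta> (k - Suc i) = par (\<eta> (k - i))"
        using assms(1,2) unfolding boundary_def e by auto
      then show ?thesis using Suc by simp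
    qed
  qed
  from this[of "k - j"] assms(4) show ?thesis by simp
qed

lemma ball_eq:
  assumes "ultrametric_element par rt \<psi>" "\<xi> \<in> boundary par rt" "r > 0"
  shows "ultra_ball par rt \<psi> \<xi> r = Cyl par rt \<xi> (mm \<psi> \<xi> r)"
proof -
  have "ultra_dist \<psi> \<xi> \<eta> \<le> r \<longleftrightarrow> \<eta> (mm \<psi> \<xi> r) = \<xi> (mm \<psi> \<xi> r)" if eta: "\<eta> \<in> boundary par rt" for \<eta>
  proof (cases "\<eta> = \<xi>")
    case True then show ?thesis using assms(3) by (simp add: ultra_dist_def)
  next
    case False
    then obtain k0 where k0: "\<xi> k0 \<noteq> \<eta> k0" by (metis ext)
    define P where "P k = (\<xi> k = \<eta> k)" for k
    have bnd: "P k \<Longrightarrow> k \<le> k0" for k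
      using agree_down[OF assms(2) eta, of k k0] k0 unfolding P_def by force
    have P0: "P 0" using assms(2) eta unfolding P_def boundary_def by auto
    define K where "K = (GREATEST k. P k)"
    have PK: "P K" unfolding K_def by (rule GreatestI_nat[where P=P, OF P0 bnd])
    have iff: "P k \<longleftrightarrow> k \<le> K" for k
    proof
      assume "P k" then show "k \<le> K" unfolding K_def by (rule Greatest_le_nat) (use bnd in blast)
    next
      assume "k \<le> K" then show "P k" using agree_down[OF assms(2) eta, of K k] PK unfolding P_def by blast
    qed
    have "ultra_dist \<psi> \<xi> \<eta> = \<psi> (\<xi> K)"
      using False unfolding ultra_dist_def confluent_def K_def P_def by auto
    then have "ultra_dist \<psi> \<xi> \<eta> \<le> r \<longleftrightarrow> mm \<psi> \<xi> r \<le> K"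
      using mm_le_iff[OF assms] by simp
    also have "\<dots> \<longleftrightarrow> P (mm \<psi> \<xi> r)" using iff by simp
    finally show ?thesis unfolding P_def by auto
  qed
  then show ?thesis unfolding ultra_ball_def Cyl_def by auto
qed

lemma ray_through:
  assumes tree: "rooted_tree par rt" and ne: "\<And>y. children par rt y \<noteq> {}"
  shows "\<exists>\<xi>\<in>boundary par rt. \<exists>k. \<xi> k = x"
proof -
  define n where "n = (LEAST n. (par ^^ n) x = rt)"
  have n: "(par ^^ n) x = rt" unfolding n_def by (rule LeastI_ex) (use tree in \<open>auto simp: rooted_tree_def\<close>)
  have nl: "m < n \<Longrightarrow> (par ^^ m) x \<noteq> rt" for m unfolding n_def by (rule not_less_Least)
  define down where "down y = (SOME c. c \<in> children par rt y)" for y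
  have down: "down y \<noteq> rt \<and> par (down y) = y" for y
  proof -
    have "down y \<in> children par rt y" unfolding down_def by (rule someI_ex) (use ne in auto)
    then show ?thesis by (simp add: children_def)
  qed
  define \<xi> where "\<xi> j = (if j \<le> n then (par ^^ (n - j)) x else (down ^^ (j - n)) x)" for j
  have "\<xi> (Suc j) \<noteq> rt \<and> par (\<xi> (Suc j)) = \<xi> j" for j
  proof (cases "Suc j \<le> n")
    case True
    have "(par ^^ (n - j)) x = par ((par ^^ (n - Suc j)) x)"
      using True by (metis Suc_diff_Suc Suc_le_lessD comp_apply funpow.simps(2))
    then show ?thesis using True nl[of "n - Suc j"] by (simp add: \<xi>_def)
  next
    case False
    have "\<xi> j = (down ^^ (j - n)) x" using False by (simp add: \<xi>_def)
    moreover have "\<xi> (Suc j) = down ((down ^^ (j - n)) x)" using False by (simp add: \<xi>_def Suc_diff_le)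
    ultimately show ?thesis using down by simp
  qed
  moreover have "\<xi> 0 = rt" using n by (simp add: \<xi>_def)
  ultimately have "\<xi> \<in> boundary par rt" unfolding boundary_def by auto
  moreover have "\<xi> n = x" by (simp add: \<xi>_def)
  ultimately show ?thesis by blast
qed



lemma null0:
  assumes pm: "is_power_measure \<rho> F t" and t: "t > 0" and lim0: "(F \<longlongrightarrow> 0) (at_right 0)"
    and Fnn: "\<And>r. 0 \<le> F r"
  shows "emeasure \<rho> {0} = 0"
proof -
  have sig: "sets \<rho> = sets borel" and ps: "prob_space \<rho>" and dF: "\<forall>r>0. distr_fun \<rho> r = F r powr t"
    using pm unfolding is_power_measure_def prob_on_nonneg_def by auto
  interpret prob_space \<rho> by (rule ps)
  have lim: "((\<lambda>r. F r powr t) \<longlongrightarrow> 0) (at_right 0)"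
    by (rule tendsto_zero_powrI[OF lim0 tendsto_const]) (use Fnn t in auto)
  have ev: "eventually (\<lambda>r. measure \<rho> {0} \<le> F r powr t) (at_right (0::real))"
    using eventually_at_right_less[of "0::real"]
  proof (rule eventually_mono)
    fix r :: real assume r: "0 < r"
    have "measure \<rho> {0} \<le> measure \<rho> {0..<r}"
      by (rule finite_measure_mono) (use r sig in auto)
    also have "\<dots> = F r powr t" using dF r by (simp add: distr_fun_def)
    finally show "measure \<rho> {0} \<le> F r powr t" .
  qed
  have "measure \<rho> {0} \<le> 0" by (rule tendsto_lowerbound[OF lim ev]) simp
  then have "measure \<rho> {0} = 0" using measure_nonneg[of \<rho> "{0}"] by linarith
  then show ?thesis using emeasure_eq_measure[of "{0}"] by simp
qed

lemma mm_0_iff: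
  assumes "ultrametric_element par rt \<psi>" "\<xi> \<in> boundary par rt"
  shows "mm \<psi> \<xi> r = 0 \<longleftrightarrow> r \<le> 0 \<or> \<psi> (\<xi> 0) \<le> r"
proof (cases "r > 0")
  case True then show ?thesis using mm_le_iff[OF assms True, of 0] by auto
next
  case False then show ?thesis by (simp add: mm_def)
qed

lemma mm_Suc_iff:
  assumes "ultrametric_element par rt \<psi>" "\<xi> \<in> boundary par rt"
  shows "mm \<psi> \<xi> r = Suc n \<longleftrightarrow> \<psi> (\<xi> (Suc n)) \<le> r \<and> r < \<psi> (\<xi> n)"
proof (cases "r > 0")
  case True
  have "mm \<psi> \<xi> r = Suc n \<longleftrightarrow> mm \<psi> \<xi> r \<le> Suc n \<and> \<not> mm \<psi> \<xi> r \<le> n" by auto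
  then show ?thesis using mm_le_iff[OF assms True, of n] mm_le_iff[OF assms True, of "Suc n"] by auto
next
  case False
  have "\<psi> (\<xi> (Suc n)) > 0" using assms(1) unfolding ultrametric_element_def by auto
  then show ?thesis using False by (simp add: mm_def)
qed

lemma mm_meas:
  assumes "ultrametric_element par rt \<psi>" "\<xi> \<in> boundary par rt"
  shows "mm \<psi> \<xi> \<in> borel \<rightarrow>\<^sub>M count_space UNIV"
  unfolding measurable_count_space_eq2_countable
proof (intro conjI ballI)
  fix a :: nat
  show "mm \<psi> \<xi> -` {a} \<inter> space borel \<in> sets borel"
  proof (cases a)
    case 0
    have "mm \<psi> \<xi> -` {a} \<inter> space borel = {..0} \<union> {\<psi> (\<xi> 0)..}"
      using mm_0_iff[OF assms] 0 by auto
    then show ?thesis by simp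
  next
    case (Suc n)
    have "mm \<psi> \<xi> -` {a} \<inter> space borel = {\<psi> (\<xi> (Suc n))..<\<psi> (\<xi> n)}"
      using mm_Suc_iff[OF assms] Suc by auto
    then show ?thesis by simp
  qed
qed simp

lemma distr_single:
  assumes rho: "prob_on_nonneg \<rho>" and z: "emeasure \<rho> {0} = 0"
    and psi: "ultrametric_element par rt \<psi>" and xi: "\<xi> \<in> boundary par rt"
  shows "emeasure (distr \<rho> (count_space UNIV) (mm \<psi> \<xi>)) {0} = ennreal (1 - distr_fun \<rho> (\<psi> (\<xi> 0)))"
    and "emeasure (distr \<rho> (count_space UNIV) (mm \<psi> \<xi>)) {Suc n}
           = ennreal (distr_fun \<rho> (\<psi> (\<xi> n)) - distr_fun \<rho> (\<psi> (\<xi> (Suc n))))"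
proof -
  have sig: "sets \<rho> = sets borel" and ps: "prob_space \<rho>"
    using rho unfolding prob_on_nonneg_def by auto
  interpret prob_space \<rho> by (rule ps)
  have sp: "space \<rho> = UNIV" using sets_eq_imp_space_eq[OF sig] by simp
  have meas: "mm \<psi> \<xi> \<in> \<rho> \<rightarrow>\<^sub>M count_space UNIV"
    using mm_meas[OF psi xi] by (simp add: measurable_cong_sets[OF sig refl])
  have pos: "\<And>x. \<psi> x > 0" using psi unfolding ultrametric_element_def by auto
  have m0: "measure \<rho> {0} = 0" using z by (simp add: measure_def)
  have Diff: "measure \<rho> {a..<b} = distr_fun \<rho> b - distr_fun \<rho> a" if "0 \<le> a" "a \<le> b" for a b
  proof -
    have "{a..<b} = {0..<b} - {0..<a}" using that by auto
    then have "measure \<rho> {a..<b} = measure \<rho> ({0..<b} - {0..<a})" by simp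
    also have "\<dots> = measure \<rho> {0..<b} - measure \<rho> {0..<a}"
      by (rule finite_measure_Diff) (use sig that in auto)
    finally show ?thesis by (simp add: distr_fun_def)
  qed
  have e0: "mm \<psi> \<xi> -` {0} \<inter> space \<rho> = space \<rho> - {0<..<\<psi> (\<xi> 0)}"
    using mm_0_iff[OF psi xi] sp by auto
  have "measure \<rho> (space \<rho> - {0<..<\<psi> (\<xi> 0)}) = 1 - measure \<rho> {0<..<\<psi> (\<xi> 0)}"
    by (rule prob_compl) (use sig in simp)
  also have "measure \<rho> {0<..<\<psi> (\<xi> 0)} = measure \<rho> ({0..<\<psi> (\<xi> 0)} - {0})"
    by (rule arg_cong[where f="measure \<rho>"]) (use pos in auto)
  also have "\<dots> = measure \<rho> {0..<\<psi> (\<xi> 0)} - measure \<rho> {0}"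
    by (rule finite_measure_Diff) (use sig pos in auto)
  finally have "measure \<rho> (mm \<psi> \<xi> -` {0} \<inter> space \<rho>) = 1 - distr_fun \<rho> (\<psi> (\<xi> 0))"
    using e0 m0 by (simp add: distr_fun_def)
  then show "emeasure (distr \<rho> (count_space UNIV) (mm \<psi> \<xi>)) {0} = ennreal (1 - distr_fun \<rho> (\<psi> (\<xi> 0)))"
    by (simp add: emeasure_distr[OF meas] emeasure_eq_measure)
  have eS: "mm \<psi> \<xi> -` {Suc n} \<inter> space \<rho> = {\<psi> (\<xi> (Suc n))..<\<psi> (\<xi> n)}"
    using mm_Suc_iff[OF psi xi] sp by auto
  have "\<psi> (\<xi> (Suc n)) \<le> \<psi> (\<xi> n)" using ray_strict[OF psi xi, of n] by simp
  then have "measure \<rho> (mm \<psi> \<xi> -` {Suc n} \<inter> space \<rho>) = distr_fun \<rho> (\<psi> (\<xi> n)) - distr_fun \<rho> (\<psi> (\<xi> (Suc n)))"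
    unfolding eS using pos[of "\<xi> (Suc n)"] by (intro Diff) auto
  then show "emeasure (distr \<rho> (count_space UNIV) (mm \<psi> \<xi>)) {Suc n}
           = ennreal (distr_fun \<rho> (\<psi> (\<xi> n)) - distr_fun \<rho> (\<psi> (\<xi> (Suc n))))"
    by (simp add: emeasure_distr[OF meas] emeasure_eq_measure)
qed

lemma Pt_eq:
  assumes rho: "prob_on_nonneg \<rho>" and z: "emeasure \<rho> {0} = 0"
    and psi: "ultrametric_element par rt \<psi>" and xi: "\<xi> \<in> boundary par rt"
  shows "P_t par rt \<mu> \<psi> \<rho> f \<xi> = integral\<^sup>L (distr \<rho> (count_space UNIV) (mm \<psi> \<xi>))
     (\<lambda>n. set_lebesgue_integral \<mu> (Cyl par rt \<xi> n) f / measure \<mu> (Cyl par rt \<xi> n))"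
    (is "_ = integral\<^sup>L _ ?G")
proof -
  have sig: "sets \<rho> = sets borel" and ps: "prob_space \<rho>" and neg: "emeasure \<rho> {..<0} = 0"
    using rho unfolding prob_on_nonneg_def by auto
  have sp: "space \<rho> = UNIV" using sets_eq_imp_space_eq[OF sig] by simp
  have mmb: "mm \<psi> \<xi> \<in> borel \<rightarrow>\<^sub>M count_space UNIV" by (rule mm_meas[OF psi xi])
  have meas: "mm \<psi> \<xi> \<in> \<rho> \<rightarrow>\<^sub>M count_space UNIV"
    using mmb by (simp add: measurable_cong_sets[OF sig refl])
  have pos: "\<And>x. \<psi> x > 0" using psi unfolding ultrametric_element_def by auto
  define c where "c = P_r par rt \<mu> \<psi> 0 f \<xi>"
  have Peq: "P_r par rt \<mu> \<psi> r f \<xi> = (if 0 < r then ?G (mm \<psi> \<xi> r) else if r = 0 then c else 0)" for r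
  proof -
    consider "0 < r" | "r = 0" | "r < 0" by linarith
    then show ?thesis
    proof cases
      case 1 then show ?thesis using ball_eq[OF psi xi 1] by (simp add: P_r_def)
    next
      case 2 then show ?thesis by (simp add: c_def)
    next
      case 3
      have "\<not> ultra_dist \<psi> \<xi> \<eta> \<le> r" for \<eta> using pos[of "confluent \<xi> \<eta>"] 3 by (simp add: ultra_dist_def)
      then have "ultra_ball par rt \<psi> \<xi> r = {}" unfolding ultra_ball_def by auto
      then show ?thesis using 3 by (simp add: P_r_def)
    qed
  qed
  have mb: "(\<lambda>r. if 0 < r then ?G (mm \<psi> \<xi> r) else if r = (0::real) then c else 0) \<in> borel_measurable borel"
    by (intro measurable_If measurable_const measurable_compose[OF mmb] borel_measurable_count_space) auto
  have mb2: "(\<lambda>r. ?G (mm \<psi> \<xi> r)) \<in> borel_measurable borel"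
    by (intro measurable_compose[OF mmb] borel_measurable_count_space)
  have "emeasure \<rho> {..<0} + emeasure \<rho> {0} = emeasure \<rho> ({..<0} \<union> {0})"
    by (rule plus_emeasure) (use sig in auto)
  moreover have "{..<0} \<union> {0} = {..(0::real)}" by auto
  ultimately have "emeasure \<rho> {..0} = 0" using neg z by simp
  then have null: "{..0} \<in> null_sets \<rho>" using sig by (simp add: null_sets_def)
  have ae: "AE r in \<rho>. 0 < r"
    by (rule AE_I'[OF null]) auto
  have "P_t par rt \<mu> \<psi> \<rho> f \<xi> = integral\<^sup>L \<rho> (\<lambda>r. ?G (mm \<psi> \<xi> r))"
    unfolding P_t_def
  proof (rule integral_cong_AE)
    show "(\<lambda>r. P_r par rt \<mu> \<psi> r f \<xi>) \<in> borel_measurable \<rho>"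
      unfolding Peq using mb by (simp add: measurable_cong_sets[OF sig refl])
    show "(\<lambda>r. ?G (mm \<psi> \<xi> r)) \<in> borel_measurable \<rho>"
      using mb2 by (simp add: measurable_cong_sets[OF sig refl])
    show "AE r in \<rho>. P_r par rt \<mu> \<psi> r f \<xi> = ?G (mm \<psi> \<xi> r)"
      using ae by eventually_elim (simp add: Peq)
  qed
  also have "\<dots> = integral\<^sup>L (distr \<rho> (count_space UNIV) (mm \<psi> \<xi>)) ?G"
    by (rule integral_distr[symmetric, OF meas borel_measurable_count_space])
  finally show ?thesis .
qed



lemma inv_ln_tendsto: "((\<lambda>y::real. - 1 / ln y) \<longlongrightarrow> 0) (at_right 0)"
proof -
  have "filterlim (\<lambda>y::real. - ln y) at_top (at_right 0)"
    by (rule filterlim_uminus_at_bot[THEN iffD1, OF ln_at_0])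
  then have "((\<lambda>y::real. inverse (- ln y)) \<longlongrightarrow> 0) (at_right 0)"
    by (rule tendsto_inverse_0_at_top)
  then show ?thesis by (simp add: divide_inverse)
qed

lemma F_star_tendsto: "(F_star \<longlongrightarrow> 0) (at_right 0)"
proof -
  have "filterlim (\<lambda>r::real. - inverse r) at_bot (at_right 0)"
    by (rule filterlim_uminus_at_top[THEN iffD1, OF filterlim_inverse_at_top_right])
  then have "((\<lambda>r::real. exp (- inverse r)) \<longlongrightarrow> 0) (at_right 0)"
    by (rule filterlim_compose[OF exp_at_bot])
  moreover have "eventually (\<lambda>r. exp (- inverse r) = F_star r) (at_right (0::real))"
    using eventually_at_right_less[of "0::real"] by eventually_elim (simp add: F_star_def divide_inverse)
  ultimately show ?thesis by (rule Lim_transform_eventually)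
qed

lemma neg_inv_ln_less:
  fixes a b :: real
  assumes "0 < a" "a < b" "b < 1"
  shows "- 1 / ln a < - 1 / ln b"
proof -
  have "ln a < ln b" "ln b < 0" using assms by auto
  then show ?thesis by (simp add: divide_simps)
qed

theorem lemma3p2:
  fixes par :: "'v \<Rightarrow> 'v" and rt :: 'v
    and \<phi> :: "'v \<Rightarrow> real" and \<mu> :: "(nat \<Rightarrow> 'v) measure" and \<sigma> :: "real measure"
  assumes tree: "rooted_tree par rt"
    and loc_fin: "locally_finite_tree par rt"
    and inf: "infinite (UNIV :: 'v set)"
    and deg: "\<And>x. forward_degree par rt x \<ge> 2"
    and phi: "ultrametric_element par rt \<phi>"
    and mu_borel: "boundary_borel_measure par rt \<mu>"
    and mu_prob: "prob_space \<mu>"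
    and mu_supp: "support par rt \<mu> = boundary par rt"
    and sigma: "prob_on_nonneg \<sigma>"
    and F0: "(distr_fun \<sigma> \<longlongrightarrow> 0) (at_right 0)"
    and Fo: "distr_fun \<sigma> (\<phi> rt) < 1"
    and Fmono: "\<And>\<xi>. \<xi> \<in> boundary par rt \<Longrightarrow> strict_mono_on (\<phi> ` range \<xi>) (distr_fun \<sigma>)"
  shows "\<exists>\<phi>s. ultrametric_element par rt \<phi>s \<and>
           (\<forall>t>0. \<forall>\<nu> \<nu>s. is_power_measure \<nu> (distr_fun \<sigma>) t \<longrightarrow> is_power_measure \<nu>s F_star t \<longrightarrow>
              (\<forall>f \<in> L2 \<mu>. \<forall>\<xi> \<in> boundary par rt. P_t par rt \<mu> \<phi> \<nu> f \<xi> = P_t par rt \<mu> \<phi>s \<nu>s f \<xi>))"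
proof -
  define F where "F = distr_fun \<sigma>"
  have Fnn: "\<And>r. 0 \<le> F r" unfolding F_def distr_fun_def by simp
  have ne: "\<And>y. children par rt y \<noteq> {}"
  proof -
    fix y show "children par rt y \<noteq> {}" using deg[of y] unfolding forward_degree_def by (metis card.empty not_numeral_le_zero)
  qed
  have Fprops: "0 < F (\<phi> x) \<and> F (\<phi> x) < 1 \<and> (x \<noteq> rt \<longrightarrow> F (\<phi> x) < F (\<phi> (par x)))" for x
  proof -
    obtain \<xi> k where xi: "\<xi> \<in> boundary par rt" and xk: "\<xi> k = x" using ray_through[OF tree ne] by blast
    have st: "F (\<phi> (\<xi> (Suc j))) < F (\<phi> (\<xi> j))" for j
      unfolding F_def by (rule strict_mono_onD[OF Fmono[OF xi]]) (use ray_strict[OF phi xi] in auto)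
    have le0: "F (\<phi> (\<xi> j)) \<le> F (\<phi> (\<xi> 0))" for j
    proof (induction j)
      case (Suc j) then show ?case using st[of j] by linarith
    qed simp
    have x0: "\<xi> 0 = rt" using xi unfolding boundary_def by auto
    have "0 < F (\<phi> x)" using st[of k] Fnn[of "\<phi> (\<xi> (Suc k))"] unfolding xk by linarith
    moreover have "F (\<phi> x) < 1" using le0[of k] Fo x0 xk unfolding F_def by simp
    moreover have "F (\<phi> x) < F (\<phi> (par x))" if nrt: "x \<noteq> rt"
    proof -
      obtain j where kj: "k = Suc j" using nrt x0 xk by (cases k) auto
      have "par x = \<xi> j" using xi xk kj unfolding boundary_def by auto
      then show ?thesis using st[of j] xk kj by simp
    qed
    ultimately show ?thesis by blast
  qed
  define \<phi>s where "\<phi>s x = - 1 / ln (F (\<phi> x))" for x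
  have phis_pos: "\<phi>s x > 0" for x
  proof -
    have "ln (F (\<phi> x)) < 0" using Fprops[of x] by simp
    then show ?thesis unfolding \<phi>s_def by (simp add: divide_simps)
  qed
  have Fstar: "F_star (\<phi>s x) = F (\<phi> x)" for x
  proof -
    have "ln (F (\<phi> x)) \<noteq> 0" using Fprops[of x] by simp
    then have "- 1 / \<phi>s x = ln (F (\<phi> x))" unfolding \<phi>s_def by simp
    then show ?thesis using phis_pos[of x] Fprops[of x] by (simp add: F_star_def)
  qed
  have phis: "ultrametric_element par rt \<phi>s"
    unfolding ultrametric_element_def
  proof (intro conjI allI impI)
    fix x show "0 < \<phi>s x" by (rule phis_pos)
  next
    fix x assume "x \<noteq> rt"
    then show "\<phi>s x < \<phi>s (par x)" unfolding \<phi>s_def using Fprops[of x] Fprops[of "par x"]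
      by (intro neg_inv_ln_less) auto
  next
    fix xs assume g: "geodesic_ray par rt xs"
    have "((\<lambda>n. \<phi> (xs n)) \<longlongrightarrow> 0) sequentially" using phi g unfolding ultrametric_element_def by blast
    then have "filterlim (\<lambda>n. \<phi> (xs n)) (at_right 0) sequentially"
      by (rule tendsto_imp_filterlim_at_right) (use phi in \<open>auto simp: ultrametric_element_def\<close>)
    then have "((\<lambda>n. F (\<phi> (xs n))) \<longlongrightarrow> 0) sequentially"
      unfolding F_def by (rule filterlim_compose[OF F0])
    then have "filterlim (\<lambda>n. F (\<phi> (xs n))) (at_right 0) sequentially"
      by (rule tendsto_imp_filterlim_at_right) (use Fprops in auto)
    then show "((\<lambda>n. \<phi>s (xs n)) \<longlongrightarrow> 0) sequentially"
      unfolding \<phi>s_def by (rule filterlim_compose[OF inv_ln_tendsto])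
  qed
  have main: "P_t par rt \<mu> \<phi> \<nu> f \<xi> = P_t par rt \<mu> \<phi>s \<nu>s f \<xi>"
    if t: "t > 0" and pn: "is_power_measure \<nu> (distr_fun \<sigma>) t" and pns: "is_power_measure \<nu>s F_star t"
      and xi: "\<xi> \<in> boundary par rt" for t \<nu> \<nu>s f \<xi>
  proof -
    have rn: "prob_on_nonneg \<nu>" and rns: "prob_on_nonneg \<nu>s"
      using pn pns unfolding is_power_measure_def by auto
    have z: "emeasure \<nu> {0} = 0"
      by (rule null0[OF pn t F0]) (simp add: distr_fun_def)
    have zs: "emeasure \<nu>s {0} = 0"
      by (rule null0[OF pns t F_star_tendsto]) (simp add: F_star_def)
    have dv: "distr_fun \<nu> (\<phi> (\<xi> n)) = distr_fun \<nu>s (\<phi>s (\<xi> n))" for n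
    proof -
      have "distr_fun \<nu> (\<phi> (\<xi> n)) = F (\<phi> (\<xi> n)) powr t"
        using pn phi unfolding is_power_measure_def ultrametric_element_def F_def by auto
      moreover have "distr_fun \<nu>s (\<phi>s (\<xi> n)) = F_star (\<phi>s (\<xi> n)) powr t"
        using pns phis_pos unfolding is_power_measure_def by auto
      ultimately show ?thesis using Fstar by simp
    qed
    have deq: "distr \<nu> (count_space UNIV) (mm \<phi> \<xi>) = distr \<nu>s (count_space UNIV) (mm \<phi>s \<xi>)"
    proof (rule measure_eqI_countable[where A=UNIV])
      fix a :: nat
      show "emeasure (distr \<nu> (count_space UNIV) (mm \<phi> \<xi>)) {a} = emeasure (distr \<nu>s (count_space UNIV) (mm \<phi>s \<xi>)) {a}"
      proof (cases a)
        case 0 then show ?thesis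
          using distr_single(1)[OF rn z phi xi] distr_single(1)[OF rns zs phis xi] dv[of 0] by simp
      next
        case (Suc n) then show ?thesis
          using distr_single(2)[OF rn z phi xi, of n] distr_single(2)[OF rns zs phis xi, of n]
            dv[of n] dv[of "Suc n"] by simp
      qed
    qed auto
    show ?thesis
      using Pt_eq[OF rn z phi xi, of \<mu> f] Pt_eq[OF rns zs phis xi, of \<mu> f] deq by simp
  qed
  show ?thesis using phis main by blast
qed

end
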